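(* Let $\nu>-1$. Then there exist constants $C,c>0$ such that $$|\partial_tp_t^\nu(x,y)|\le \frac{C}{t^{3/2}}\exp\Big(-\frac{|x-y|^2}{ct}\Big)\Big(1+\frac{\sqrt t}{x}\Big)^{\gamma_\nu}\Big(1+\frac{\sqrt t}{y}\Big)^{\gamma_\nu}$$ for all $t>0$ and $x,y\in(0,\infty)$.
   Context: For $\nu>-1$, $p_t^\nu(x,y)$ is the integral kernel of $e^{-t\mathcal L_\nu}$, where $\mathcal L_\nu$ is the one-dimensional Laguerre operator on $(0,\infty)$ (eigenfunctions the Laguerre functions $\varphi_k^\nu$, eigenvalues $4k+2\nu+2$); explicitly, with $r=e^{-4t}$, $p_t^\nu(x,y)=\frac{2(rxy)^{1/2}}{1-r}\exp\big(-\frac12\frac{1+r}{1-r}(x^2+y^2)\big)I_\nu\big(\frac{2r^{1/2}}{1-r}xy\big)$, $I_\nu$ the modified Bessel function of the first kind. $\gamma_\nu=-1/2-\nu$ if $-1<\nu<-1/2$ and $\gamma_\nu=0$ if $\nu\ge-1/2$. *)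

theory Defs
  imports "HOL-Analysis.Analysis"
begin

definition besselI :: "real \<Rightarrow> real \<Rightarrow> real" where
  "besselI nu z = (\<Sum>k. (z / 2) powr (2 * real k + nu) / (fact k * Gamma (real k + nu + 1)))"

definition laguerre_heat_kernel :: "real \<Rightarrow> real \<Rightarrow> real \<Rightarrow> real \<Rightarrow> real" where
  "laguerre_heat_kernel nu t x y =
     (let r = exp (-4 * t) in
       2 * sqrt (r * x * y) / (1 - r)
       * exp (- (1/2) * ((1 + r) / (1 - r)) * (x^2 + y^2))
       * besselI nu (2 * sqrt r / (1 - r) * x * y))"

definition gamma_nu :: "real \<Rightarrow> real" where
  "gamma_nu nu = (if nu < -1/2 then -1/2 - nu else 0)"

end

theory Submission
  imports Defs
begin


definition aco :: "real \<Rightarrow> nat \<Rightarrow> real" where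
  "aco nu k = 1 / (fact k * Gamma (real k + nu + 1))"

definition FF :: "real \<Rightarrow> real \<Rightarrow> real" where
  "FF nu w = (\<Sum>k. aco nu k * w ^ k)"

lemma Gamma_pos_aux: "nu > -1 \<Longrightarrow> Gamma (real k + nu + 1) > 0"
  by (rule Gamma_real_pos) simp

lemma aco_pos: "nu > -1 \<Longrightarrow> aco nu k > 0"
  unfolding aco_def using Gamma_pos_aux[of nu k] by simp

lemma Gamma_Suc_aux:
  assumes "nu > -1"
  shows "Gamma (real (Suc k) + nu + 1) = (real k + nu + 1) * Gamma (real k + nu + 1)"
proof -
  have "real k + nu + 1 \<notin> \<int>\<^sub>\<le>\<^sub>0"
    using assms by (auto elim!: nonpos_Ints_cases)
  from Gamma_plus1[OF this] show ?thesis by (simp add: algebra_simps)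
qed

lemma aco_Suc:
  assumes "nu > -1"
  shows "aco nu (Suc k) = aco nu k / ((real k + 1) * (real k + nu + 1))"
  unfolding aco_def using Gamma_Suc_aux[OF assms, of k] by (simp add: field_simps)

lemma diffs_aco:
  assumes "nu > -1"
  shows "diffs (aco nu) = aco (nu + 1)"
proof
  fix n
  show "diffs (aco nu) n = aco (nu + 1) n"
  proof -
    have g: "Gamma (real n + (nu + 1) + 1) = (real n + nu + 1) * Gamma (real n + nu + 1)"
      using Gamma_Suc_aux[OF assms, of n] by (simp add: algebra_simps)
    have p: "real n + nu + 1 > 0" "Gamma (real n + nu + 1) > 0" using assms Gamma_pos_aux[OF assms, of n] by auto
    have "diffs (aco nu) n = (real n + 1) * aco nu (Suc n)" unfolding diffs_def by simp
    also have "\<dots> = aco nu n / (real n + nu + 1)"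
    proof -
      have "\<And>a b c::real. b \<noteq> 0 \<Longrightarrow> c \<noteq> 0 \<Longrightarrow> b * (a / (b * c)) = a / c" by (simp add: field_simps)
      thus ?thesis using p unfolding aco_Suc[OF assms] by (metis add_nonneg_pos of_nat_0_le_iff zero_less_one less_irrefl)
    qed
    also have "\<dots> = aco (nu + 1) n" unfolding aco_def g using p by (simp add: field_simps)
    finally show ?thesis .
  qed
qed

lemma aco_summable:
  assumes "nu > -1"
  shows "summable (\<lambda>k. aco nu k * w ^ k)"
proof -
  obtain N :: nat where N: "real N \<ge> 2 * \<bar>w\<bar>" using real_arch_simple by blast
  show ?thesis
proof (rule summable_ratio_test[where c="1/2" and N=N])
  show "1/2 < (1::real)" by simp
  fix n assume "n \<ge> N"
  hence n: "real n \<ge> 2 * \<bar>w\<bar>" using N by linarith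
  have pos: "aco nu n > 0" using aco_pos[OF assms] .
  have d: "(real n + 1) * (real n + nu + 1) \<ge> 2 * \<bar>w\<bar>"
  proof -
    have "real n + nu + 1 \<ge> 0" using assms by simp
    have "(real n + 1) * (real n + nu + 1) \<ge> (real n + 1) * 1 \<or> real n + nu + 1 < 1" by auto
    show ?thesis
    proof (cases "real n + nu + 1 \<ge> 1")
      case True
      hence "(real n + 1) * (real n + nu + 1) \<ge> (real n + 1) * 1"
        by (intro mult_left_mono) auto
      hence "(real n + 1) * (real n + nu + 1) \<ge> real n + 1" by simp
      thus ?thesis using n by linarith
    next
      case False
      hence "n = 0" using assms by (cases n) auto
      hence "w = 0" using n by simp
      have "0 \<le> (real n + 1) * (real n + nu + 1)" using assms by (intro mult_nonneg_nonneg) auto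
      thus ?thesis using \<open>w = 0\<close> by simp
    qed
  qed
  have dpos: "(real n + 1) * (real n + nu + 1) > 0" using assms by (intro mult_pos_pos) auto
  have "norm (aco nu (Suc n) * w ^ Suc n) = aco nu n * \<bar>w\<bar>^n * (\<bar>w\<bar> / ((real n + 1) * (real n + nu + 1)))"
    using pos dpos by (simp add: aco_Suc[OF assms] abs_mult power_abs field_simps)
  also have "\<dots> \<le> aco nu n * \<bar>w\<bar>^n * (1/2)"
    using pos dpos d by (intro mult_left_mono) (auto simp: field_simps)
  also have "\<dots> = 1/2 * norm (aco nu n * w ^ n)"
    using pos by (simp add: abs_mult power_abs)
  finally show "norm (aco nu (Suc n) * w ^ Suc n) \<le> 1/2 * norm (aco nu n * w ^ n)" .
qed
qed

lemma FF_deriv: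
  assumes "nu > -1"
  shows "(FF nu has_real_derivative FF (nu + 1) w) (at w)"
proof -
  have "((\<lambda>x. \<Sum>n. aco nu n * x^n) has_field_derivative (\<Sum>n. diffs (aco nu) n * w^n)) (at w)"
    by (rule termdiffs_strong_converges_everywhere) (rule aco_summable[OF assms])
  thus ?thesis unfolding FF_def[abs_def] diffs_aco[OF assms] FF_def by simp
qed

lemma FF_pos:
  assumes "nu > -1" "w \<ge> 0"
  shows "FF nu w > 0"
  unfolding FF_def
proof (rule suminf_pos2[where i=0])
  fix n show "0 \<le> aco nu n * w ^ n"
    using assms aco_pos[OF assms(1), of n] by (metis less_imp_le mult_nonneg_nonneg zero_le_power)
qed (use aco_summable[OF assms(1)] aco_pos[OF assms(1)] in auto)

lemma FF_le:
  assumes "nu > -1" "0 \<le> v" "v \<le> w"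
  shows "FF nu v \<le> FF nu w"
  unfolding FF_def
proof (rule suminf_le)
  fix n show "aco nu n * v ^ n \<le> aco nu n * w ^ n"
    using assms aco_pos[OF assms(1), of n] by (intro mult_left_mono power_mono) auto
qed (use aco_summable[OF assms(1)] in auto)

lemma aco_shift:
  assumes "nu > -1"
  shows "aco (nu + 1) n = aco nu n / (real n + nu + 1)"
proof -
  have "aco (nu + 1) n = diffs (aco nu) n" using diffs_aco[OF assms] by simp
  also have "\<dots> = (real n + 1) * aco nu (Suc n)" unfolding diffs_def by simp
  also have "\<dots> = aco nu n / (real n + nu + 1)"
  proof -
    have p: "real n + nu + 1 > 0" using assms by simp
    have "\<And>a b c::real. b \<noteq> 0 \<Longrightarrow> c \<noteq> 0 \<Longrightarrow> b * (a / (b * c)) = a / c" by (simp add: field_simps)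
    thus ?thesis using p unfolding aco_Suc[OF assms] by (metis add_nonneg_pos of_nat_0_le_iff zero_less_one less_irrefl)
  qed
  finally show ?thesis .
qed

lemma FF_Suc_le:
  assumes "nu > -1" "0 \<le> w"
  shows "FF (nu + 1) w \<le> FF nu w / (nu + 1)"
proof -
  have t: "aco (nu + 1) k * w ^ k \<le> aco nu k * w ^ k / (nu + 1)" for k
  proof -
    have a: "aco nu k * w ^ k \<ge> 0" using aco_pos[OF assms(1), of k] assms by simp
    have "aco (nu + 1) k * w ^ k = aco nu k * w ^ k / (real k + nu + 1)"
      by (simp add: aco_shift[OF assms(1)])
    also have "\<dots> \<le> aco nu k * w ^ k / (nu + 1)"
      using a assms by (intro divide_left_mono) auto
    finally show ?thesis .
  qed
  have "FF (nu + 1) w \<le> (\<Sum>k. aco nu k * w ^ k / (nu + 1))"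
    unfolding FF_def using t aco_summable[OF assms(1)] aco_summable[of "nu+1"] assms
    by (intro suminf_le) (auto intro: summable_divide)
  also have "\<dots> = FF nu w / (nu + 1)" unfolding FF_def
    using aco_summable[OF assms(1)] by (simp add: suminf_divide)
  finally show ?thesis .
qed

lemma FF_ode:
  assumes "nu > -1"
  shows "FF nu w = (nu + 1) * FF (nu + 1) w + w * FF (nu + 2) w"
proof -
  have n1: "nu + 1 > -1" using assms by simp
  have e2: "nu + 1 + 1 = nu + 2" by simp
  define g where "g k = real k * aco (nu + 1) k * w ^ k" for k
  have "(\<lambda>j. diffs (aco (nu + 1)) j * w ^ j) sums FF (nu + 2) w"
    unfolding diffs_aco[OF n1] e2 FF_def using aco_summable[of "nu + 2" w] assms
    by (intro summable_sums) auto
  hence "(\<lambda>j. w * (diffs (aco (nu + 1)) j * w ^ j)) sums (w * FF (nu + 2) w)"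
    by (rule sums_mult)
  moreover have "(\<lambda>j. w * (diffs (aco (nu + 1)) j * w ^ j)) = (\<lambda>j. g (Suc j))"
    unfolding g_def diffs_def by (auto simp: algebra_simps)
  ultimately have "g sums (w * FF (nu + 2) w)"
    using sums_Suc_iff[of g] by (simp add: g_def)
  moreover have "(\<lambda>k. (nu + 1) * (aco (nu + 1) k * w ^ k)) sums ((nu + 1) * FF (nu + 1) w)"
    unfolding FF_def using aco_summable[OF n1] by (intro sums_mult summable_sums)
  ultimately have "(\<lambda>k. (nu + 1) * (aco (nu + 1) k * w ^ k) + g k) sums ((nu + 1) * FF (nu + 1) w + w * FF (nu + 2) w)"
    by (intro sums_add)
  moreover have "(\<lambda>k. (nu + 1) * (aco (nu + 1) k * w ^ k) + g k) = (\<lambda>k. aco nu k * w ^ k)"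
  proof
    fix k
    have p: "real k + nu + 1 > 0" using assms by simp
    show "(nu + 1) * (aco (nu + 1) k * w ^ k) + g k = aco nu k * w ^ k"
    proof -
      have "\<And>a::real. (nu + 1) * (a / (real k + nu + 1)) + real k * (a / (real k + nu + 1)) = a"
        using p by (simp add: divide_simps) (simp add: algebra_simps)
      from this[of "aco nu k * w ^ k"] show ?thesis unfolding g_def aco_shift[OF assms] by (simp add: algebra_simps)
    qed
  qed
  ultimately have "(\<lambda>k. aco nu k * w ^ k) sums ((nu + 1) * FF (nu + 1) w + w * FF (nu + 2) w)" by simp
  thus ?thesis unfolding FF_def by (simp add: sums_iff)
qed



lemma pos_barrier:
  fixes h h' :: "real \<Rightarrow> real"
  assumes ha: "h a > 0"
    and der: "\<And>z. z \<ge> a \<Longrightarrow> (h has_real_derivative h' z) (at z)"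
    and cr: "\<And>z. z \<ge> a \<Longrightarrow> h z = 0 \<Longrightarrow> h' z > 0"
    and b: "b \<ge> a"
  shows "h b > 0"
proof (rule ccontr)
  assume "\<not> h b > 0"
  hence hb: "h b \<le> 0" by simp
  have cont: "isCont h x" if "x \<ge> a" for x using der[OF that] by (rule DERIV_isCont)
  have conton: "continuous_on {a..b} h" using cont by (intro continuous_at_imp_continuous_on) auto
  define Z where "Z = {x \<in> {a..b}. h x = 0}"
  have "closed Z" unfolding Z_def by (rule continuous_closed_preimage_constant[OF conton]) simp
  moreover have "bounded Z" by (rule bounded_subset[OF bounded_closed_interval]) (auto simp: Z_def)
  ultimately have cpt: "compact Z" using compact_eq_bounded_closed by blast
  have ne: "Z \<noteq> {}"
  proof -
    obtain x where "a \<le> x" "x \<le> b" "h x = 0" using IVT2[of h b 0 a] hb ha b cont by force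
    thus ?thesis unfolding Z_def by auto
  qed
  obtain c where cZ: "c \<in> Z" and cmin: "\<And>y. y \<in> Z \<Longrightarrow> c \<le> y"
    using compact_attains_inf[OF cpt ne] by blast
  have hc: "h c = 0" "a \<le> c" "c \<le> b" using cZ unfolding Z_def by auto
  have ca: "c > a" using hc ha by (cases "c = a") auto
  have "h' c > 0" using cr hc by auto
  then obtain d where d: "d > 0" "\<And>k. k > 0 \<Longrightarrow> k < d \<Longrightarrow> h (c - k) < h c"
    using DERIV_pos_inc_left[OF der[OF hc(2)]] by blast
  define k where "k = min (d/2) ((c - a)/2)"
  have k01: "k > 0" unfolding k_def using d(1) ca by simp
  have k02: "k \<le> d/2" unfolding k_def by (rule min.cobounded1)
  have k03: "k \<le> (c-a)/2" unfolding k_def by (rule min.cobounded2)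
  note k0 = k01 k02 k03
  have k: "k > 0" "k < d" "c - k \<ge> a" "c - k < c"
    using k01 apply simp
    using k02 d(1) apply linarith
    using k03 ca apply (simp add: field_simps)
    using k01 by linarith
  have "h (c - k) < 0" using d(2)[OF k(1) k(2)] hc by simp
  then obtain x where x: "a \<le> x" "x \<le> c - k" "h x = 0"
    using IVT2[of h "c - k" 0 a] ha k cont by force
  hence "x \<in> Z" using hc k unfolding Z_def by auto
  with cmin x k show False by force
qed



lemma FF_comp_deriv:
  assumes "a > -1"
  shows "((\<lambda>z. FF a (z^2/4)) has_real_derivative FF (a + 1) (z^2/4) * (z/2)) (at z)"
proof -
  have "((\<lambda>z. z^2/4) has_real_derivative z/2) (at z)"
    by (auto intro!: derivative_eq_intros)
  from DERIV_chain2[OF FF_deriv[OF assms] this] show ?thesis .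
qed

definition psi :: "real \<Rightarrow> real \<Rightarrow> real" where
  "psi nu z = (z/2) * FF (nu + 1) (z^2/4) / FF nu (z^2/4)"

lemma psi_deriv:
  assumes nu: "nu > -1" and z: "z > 0"
  shows "(psi nu has_real_derivative (1 - (2*nu+1)/z * psi nu z - (psi nu z)^2)) (at z)"
proof -
  define w where "w = z^2/4"
  define P where "P = FF (nu + 1) w"
  define Q where "Q = FF nu w"
  define R where "R = FF (nu + 2) w"
  have n1: "nu + 1 > -1" using nu by simp
  have e2: "nu + 1 + 1 = nu + 2" by simp
  have Qpos: "Q > 0" unfolding Q_def w_def using FF_pos[OF nu] by simp
  have Ppos: "P > 0" unfolding P_def w_def using FF_pos[OF n1] by simp
  have ode: "Q = (nu + 1) * P + w * R" unfolding P_def Q_def R_def using FF_ode[OF nu] .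
  have dP: "((\<lambda>z. FF (nu+1) (z^2/4)) has_real_derivative R * (z/2)) (at z)"
    using FF_comp_deriv[OF n1, of z] unfolding e2 R_def w_def .
  have dQ: "((\<lambda>z. FF nu (z^2/4)) has_real_derivative P * (z/2)) (at z)"
    using FF_comp_deriv[OF nu, of z] unfolding P_def w_def .
  have "((\<lambda>z. (z/2) * FF (nu + 1) (z^2/4) / FF nu (z^2/4)) has_real_derivative
      (((1/2) * P + (z/2) * (R * (z/2))) * Q - (z/2) * P * (P * (z/2))) / (Q * Q)) (at z)"
  proof -
    have dz: "((\<lambda>z. z/2) has_real_derivative 1/2) (at z)" by (auto intro!: derivative_eq_intros)
    have "FF nu (z^2/4) \<noteq> 0" using Qpos unfolding Q_def w_def by simp
    from DERIV_divide[OF DERIV_mult[OF dz dP] dQ this] show ?thesis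
      unfolding P_def Q_def w_def by (simp add: algebra_simps)
  qed
  moreover have "psi nu z = (z/2) * P / Q" unfolding psi_def P_def Q_def w_def ..
  moreover have "(((1/2) * P + (z/2) * (R * (z/2))) * Q - (z/2) * P * (P * (z/2))) / (Q * Q)
      = 1 - (2*nu+1)/z * ((z/2) * P / Q) - ((z/2) * P / Q)^2"
  proof -
    have wR: "w * R = Q - (nu + 1) * P" using ode by simp
    have "(z/2) * (R * (z/2)) = w * R" unfolding w_def by (simp add: power2_eq_square)
    hence "(((1/2) * P + (z/2) * (R * (z/2))) * Q - (z/2) * P * (P * (z/2))) / (Q * Q)
       = (((1/2) * P + (Q - (nu + 1) * P)) * Q - (z/2) * P * (P * (z/2))) / (Q * Q)"
      using wR by simp
    also have "\<dots> = 1 - (2*nu+1)/z * ((z/2) * P / Q) - ((z/2) * P / Q)^2"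
      using Qpos z by (simp add: field_simps power2_eq_square)
    finally show ?thesis .
  qed
  ultimately show ?thesis unfolding psi_def[abs_def] by simp
qed

lemma psi_nonneg: "nu > -1 \<Longrightarrow> z \<ge> 0 \<Longrightarrow> psi nu z \<ge> 0"
  unfolding psi_def using FF_pos[of nu "z^2/4"] FF_pos[of "nu+1" "z^2/4"] by simp

lemma psi_le: "nu > -1 \<Longrightarrow> z \<ge> 0 \<Longrightarrow> psi nu z \<le> z / (2 * (nu + 1))"
proof -
  assume nu: "nu > -1" and z: "z \<ge> 0"
  have Q: "FF nu (z^2/4) > 0" using FF_pos[OF nu] by simp
  have "FF (nu + 1) (z^2/4) \<le> FF nu (z^2/4) / (nu + 1)" using FF_Suc_le[OF nu] by simp
  hence "FF (nu + 1) (z^2/4) / FF nu (z^2/4) \<le> 1 / (nu + 1)" using Q nu by (simp add: field_simps)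
  hence "(z/2) * (FF (nu + 1) (z^2/4) / FF nu (z^2/4)) \<le> (z/2) * (1 / (nu + 1))"
    using z by (intro mult_left_mono) auto
  thus ?thesis unfolding psi_def by simp
qed



definition ee :: "real \<Rightarrow> real \<Rightarrow> real" where
  "ee nu z = psi nu z - 1 + (nu + 1/2) / z"

lemma ee_deriv:
  assumes nu: "nu > -1" and z: "z > 0"
  shows "(ee nu has_real_derivative (- ee nu z * (2 + ee nu z) + (nu^2 - 1/4) / z^2)) (at z)"
proof -
  have "((\<lambda>z. psi nu z - 1 + (nu + 1/2) / z) has_real_derivative
      (1 - (2*nu+1)/z * psi nu z - (psi nu z)^2) - (nu + 1/2) / z^2) (at z)"
    using z by (auto intro!: derivative_eq_intros psi_deriv[OF nu z] simp: power2_eq_square field_simps)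
  moreover have "(1 - (2*nu+1)/z * psi nu z - (psi nu z)^2) - (nu + 1/2) / z^2
      = - ee nu z * (2 + ee nu z) + (nu^2 - 1/4) / z^2"
    unfolding ee_def using z by (simp add: field_simps power2_eq_square)
  ultimately show ?thesis unfolding ee_def[abs_def] by simp
qed

lemma ee_upper:
  assumes nu: "nu > -1"
  shows "\<exists>A>0. \<forall>z\<ge>4. ee nu z < A / z^2"
proof -
  define mu where "mu = nu^2 - 1/4"
  define A where "A = max (\<bar>mu\<bar> + 1) (16 * \<bar>ee nu 4\<bar> + 1)"
  have A: "A > 0" "A \<ge> \<bar>mu\<bar> + 1" "A \<ge> 16 * \<bar>ee nu 4\<bar> + 1" unfolding A_def by auto
  have "\<forall>z\<ge>4. A / z^2 - ee nu z > 0"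
  proof (intro allI impI)
    fix b :: real assume b: "b \<ge> 4"
    show "A / b^2 - ee nu b > 0"
    proof (rule pos_barrier[where a=4 and h="\<lambda>z. A / z^2 - ee nu z" and h'="\<lambda>z. -2*A/z^3 - (- ee nu z * (2 + ee nu z) + mu / z^2)"])
      have "16*(A / 4^2 - ee nu 4) = A - 16 * ee nu 4" by simp
      moreover have "ee nu 4 \<le> \<bar>ee nu 4\<bar>" by simp
      ultimately have "16*(A / 4^2 - ee nu 4) > 0" using A(3) by linarith
      thus "A / 4^2 - ee nu 4 > 0" by simp
      show "4 \<le> b" by fact
    next
      fix z :: real assume z: "z \<ge> 4"
      show "((\<lambda>z. A / z^2 - ee nu z) has_real_derivative -2*A/z^3 - (- ee nu z * (2 + ee nu z) + mu / z^2)) (at z)"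
        using z ee_deriv[OF nu, of z] unfolding mu_def
        by (auto intro!: derivative_eq_intros simp: field_simps power2_eq_square power3_eq_cube)
    next
      fix z :: real assume z: "z \<ge> 4" and h0: "A / z^2 - ee nu z = 0"
      hence e: "ee nu z = A / z^2" by simp
      have ep: "ee nu z > 0" using e A z by simp
      have "- ee nu z * (2 + ee nu z) + mu / z^2 \<le> -2 * ee nu z + mu / z^2"
        using ep by (simp add: algebra_simps)
      also have "\<dots> = (mu - 2*A) / z^2" using e by (simp add: diff_divide_distrib)
      also have "\<dots> < -2*A/z^3"
      proof -
        have "(2*A - mu) * z \<ge> (2*A - mu) * 4" using A z by (intro mult_left_mono) auto
        moreover have "(2*A - mu) * 4 = 8*A - 4*mu" by simp
        moreover have "mu \<le> \<bar>mu\<bar>" by simp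
        ultimately have "(2*A - mu) * z > 2 * A" using A by linarith
        moreover have "-2*A/z^3 - (mu - 2*A) / z^2 = ((2*A - mu) * z - 2*A)/z^3"
          using z by (simp add: field_simps power2_eq_square power3_eq_cube)
        ultimately have "-2*A/z^3 - (mu - 2*A) / z^2 > 0" using z by simp
        thus ?thesis by simp
      qed
      finally show "-2*A/z^3 - (- ee nu z * (2 + ee nu z) + mu / z^2) > 0" by simp
    qed
  qed
  thus ?thesis using A(1) by force
qed

lemma ee_lower:
  assumes nu: "nu > -1"
  shows "\<exists>B>0. \<forall>z\<ge>4. ee nu z > - B / z"
proof -
  define mu where "mu = nu^2 - 1/4"
  define B where "B = max (\<bar>mu\<bar> + 1) (4 * \<bar>ee nu 4\<bar> + 1)"
  have B: "B > 0" "B \<ge> \<bar>mu\<bar> + 1" "B \<ge> 4 * \<bar>ee nu 4\<bar> + 1" unfolding B_def by auto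
  have "\<forall>z\<ge>4. ee nu z + B / z > 0"
  proof (intro allI impI)
    fix b :: real assume b: "b \<ge> 4"
    show "ee nu b + B / b > 0"
    proof (rule pos_barrier[where a=4 and h="\<lambda>z. ee nu z + B / z" and h'="\<lambda>z. (- ee nu z * (2 + ee nu z) + mu / z^2) - B/z^2"])
      have "4*(ee nu 4 + B / 4) = 4 * ee nu 4 + B" by simp
      moreover have "- ee nu 4 \<le> \<bar>ee nu 4\<bar>" by simp
      ultimately have "4*(ee nu 4 + B / 4) > 0" using B(3) by linarith
      thus "ee nu 4 + B / 4 > 0" by simp
      show "4 \<le> b" by fact
    next
      fix z :: real assume z: "z \<ge> 4"
      show "((\<lambda>z. ee nu z + B / z) has_real_derivative (- ee nu z * (2 + ee nu z) + mu / z^2) - B/z^2) (at z)"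
        using z ee_deriv[OF nu, of z] unfolding mu_def
        by (auto intro!: derivative_eq_intros simp: field_simps power2_eq_square)
    next
      fix z :: real assume z: "z \<ge> 4" and h0: "ee nu z + B / z = 0"
      hence e: "ee nu z = - B / z" by simp
      have "2 + ee nu z = 1 + psi nu z + (nu + 1/2) / z" unfolding ee_def by simp
      moreover have "psi nu z \<ge> 0" using psi_nonneg[OF nu] z by simp
      moreover have "(nu + 1/2) / z \<ge> -1/8"
      proof -
        have "(nu + 1/2) / z \<ge> (-1/2) / z" using nu z by (intro divide_right_mono) auto
        moreover have "(-1/2) / z \<ge> -1/8" using z by (simp add: field_simps)
        ultimately show ?thesis by linarith
      qed
      ultimately have t: "2 + ee nu z \<ge> 7/8" by linarith
      have "- ee nu z * (2 + ee nu z) = (B / z) * (2 + ee nu z)" using e by simp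
      also have "\<dots> \<ge> (B / z) * (7/8)" using t B z by (intro mult_left_mono) auto
      finally have "- ee nu z * (2 + ee nu z) \<ge> (B/z) * (7/8)" .
      moreover have "(B/z) * (7/8) + mu / z^2 - B / z^2 > 0"
      proof -
        have "B * z * (7/8) \<ge> B * 4 * (7/8)" using B z by simp
        moreover have "mu \<ge> - \<bar>mu\<bar>" by simp
        ultimately have "B * z * (7/8) + mu - B > 0" using B by linarith
        moreover have "(B/z)*(7/8) + mu/z^2 - B/z^2 = (B*z*(7/8) + mu - B)/z^2"
          using z by (simp add: field_simps power2_eq_square)
        ultimately show ?thesis using z by simp
      qed
      ultimately show "(- ee nu z * (2 + ee nu z) + mu / z^2) - B/z^2 > 0" by linarith
    qed
  qed
  thus ?thesis using B(1) by force
qed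



lemma psi_close:
  assumes nu: "nu > -1"
  shows "\<exists>K>0. \<forall>z>0. \<bar>z * psi nu z - z\<bar> \<le> K"
proof -
  obtain A where A: "A > 0" "\<And>z. z \<ge> 4 \<Longrightarrow> ee nu z < A / z^2" using ee_upper[OF nu] by blast
  obtain B where B: "B > 0" "\<And>z. z \<ge> 4 \<Longrightarrow> ee nu z > - B / z" using ee_lower[OF nu] by blast
  define K where "K = A/4 + B + \<bar>nu + 1/2\<bar> + 8/(nu+1) + 4"
  have n1: "nu + 1 > 0" using nu by simp
  have K: "K > 0" unfolding K_def using A B n1 by (intro add_pos_pos add_nonneg_pos) auto
  have "\<bar>z * psi nu z - z\<bar> \<le> K" if z: "z > 0" for z
  proof (cases "z \<ge> 4")
    case True
    have eq: "z * psi nu z - z = z * ee nu z - (nu + 1/2)" unfolding ee_def using z by (simp add: field_simps)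
    have u: "z * ee nu z \<le> A / 4"
    proof -
      have "z * ee nu z \<le> z * (A / z^2)" using A(2)[OF True] z by (intro mult_left_mono) auto
      also have "\<dots> = A / z" using z by (simp add: power2_eq_square)
      also have "\<dots> \<le> A / 4" using A True by (intro divide_left_mono) auto
      finally show ?thesis .
    qed
    have l: "z * ee nu z \<ge> - B"
    proof -
      have "z * ee nu z \<ge> z * (- B / z)" using B(2)[OF True] z by (intro mult_left_mono) auto
      thus ?thesis using z by simp
    qed
    have "\<bar>z * ee nu z - (nu + 1/2)\<bar> \<le> A/4 + B + \<bar>nu + 1/2\<bar>" using u l A B abs_ge_self[of "nu+1/2"] abs_ge_minus_self[of "nu+1/2"] by (simp only: abs_le_iff) linarith
    moreover have "8/(nu+1) \<ge> 0" using n1 by simp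
    ultimately show ?thesis unfolding eq K_def by linarith
  next
    case False
    have p0: "psi nu z \<ge> 0" using psi_nonneg[OF nu] z by simp
    have p1: "psi nu z \<le> 2 / (nu + 1)"
    proof -
      have "psi nu z \<le> z / (2 * (nu + 1))" using psi_le[OF nu] z by simp
      also have "\<dots> \<le> 4 / (2 * (nu + 1))" using False n1 by (intro divide_right_mono) auto
      also have "4 / (2 * (nu + 1)) = 2 / (nu + 1)" using n1 by (simp add: field_simps)
      finally show ?thesis .
    qed
    have "z * psi nu z \<le> 4 * (2 / (nu + 1))" using p0 p1 False z n1 by (intro mult_mono) auto
    moreover have "z * psi nu z \<ge> 0" using p0 z by simp
    ultimately have "\<bar>z * psi nu z - z\<bar> \<le> 8/(nu+1) + 4" using False z by (simp add: abs_le_iff)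
    thus ?thesis unfolding K_def using A B by simp
  qed
  thus ?thesis using K by blast
qed

lemma FF_growth:
  assumes nu: "nu > -1"
  shows "\<exists>K>0. \<forall>z\<ge>4. FF nu (z^2/4) \<le> K * exp z * z powr (-(nu + 1/2))"
proof -
  obtain A where A: "A > 0" "\<And>z. z \<ge> 4 \<Longrightarrow> ee nu z < A / z^2" using ee_upper[OF nu] by blast
  define g where "g z = ln (FF nu (z^2/4)) - z + (nu + 1/2) * ln z + A / z" for z
  have Qpos: "FF nu (z^2/4) > 0" for z using FF_pos[OF nu] by simp
  have dg: "(g has_real_derivative ee nu z - A / z^2) (at z)" if z: "z \<ge> 4" for z
  proof -
    have dQ: "((\<lambda>z. FF nu (z^2/4)) has_real_derivative FF (nu + 1) (z^2/4) * (z/2)) (at z)"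
      by (rule FF_comp_deriv[OF nu])
    have dl: "((\<lambda>z. ln (FF nu (z^2/4))) has_real_derivative 1 / FF nu (z^2/4) * (FF (nu + 1) (z^2/4) * (z/2))) (at z)"
      by (rule DERIV_chain2[OF DERIV_ln_divide[OF Qpos] dQ])
    have "(g has_real_derivative 1 / FF nu (z^2/4) * (FF (nu + 1) (z^2/4) * (z/2)) - 1 + (nu + 1/2) * (1 / z) + - A / z^2) (at z)"
    proof -
      have d2: "((\<lambda>z. z) has_real_derivative 1) (at z)" by (rule DERIV_ident)
      have d3: "((\<lambda>z. (nu + 1/2) * ln z) has_real_derivative (nu + 1/2) * (1 / z)) (at z)"
        using z by (intro DERIV_cmult DERIV_ln_divide) auto
      have d4: "((\<lambda>z. A / z) has_real_derivative - A / z^2) (at z)"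
        using z by (auto intro!: derivative_eq_intros simp: power2_eq_square)
      show ?thesis unfolding g_def[abs_def]
        by (rule DERIV_add[OF DERIV_add[OF DERIV_diff[OF dl d2] d3] d4])
    qed
    moreover have "1 / FF nu (z^2/4) * (FF (nu + 1) (z^2/4) * (z/2)) - 1 + (nu + 1/2) * (1 / z) + - A / z^2 = ee nu z - A / z^2"
      unfolding ee_def psi_def by (simp add: field_simps)
    ultimately show ?thesis by (rule DERIV_cong)
  qed
  define K where "K = exp (g 4)"
  have "FF nu (z^2/4) \<le> K * exp z * z powr (-(nu + 1/2))" if z: "z \<ge> 4" for z
  proof -
    have "g z \<le> g 4"
      by (rule deriv_nonpos_imp_antimono[where g'="\<lambda>z. ee nu z - A / z^2"]) (use dg A z in \<open>auto simp: less_imp_le\<close>)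
    hence "ln (FF nu (z^2/4)) \<le> g 4 + z - (nu + 1/2) * ln z - A / z" unfolding g_def by simp
    also have "\<dots> \<le> g 4 + z - (nu + 1/2) * ln z" using A z by simp
    finally have "FF nu (z^2/4) \<le> exp (g 4 + z - (nu + 1/2) * ln z)"
      using Qpos[of z] by (metis exp_le_cancel_iff exp_ln)
    also have "\<dots> = K * exp z * z powr (-(nu + 1/2))"
    proof -
      have "g 4 + z - (nu + 1/2) * ln z = g 4 + z + (-(nu + 1/2) * ln z)" by (simp add: algebra_simps)
      moreover have "exp (- (nu + 1/2) * ln z) = z powr (-(nu + 1/2))" using z by (simp add: powr_def)
      ultimately show ?thesis unfolding K_def by (simp only: exp_add)
    qed
    finally show ?thesis .
  qed
  thus ?thesis unfolding K_def by (intro exI[of _ "exp (g 4)"]) auto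
qed



definition SS :: "real \<Rightarrow> real" where "SS t = (exp (2*t) - exp (-2*t)) / 2"
definition CC :: "real \<Rightarrow> real" where "CC t = (exp (2*t) + exp (-2*t)) / 2"

lemma SS_pos: "t > 0 \<Longrightarrow> SS t > 0"
  unfolding SS_def by simp

lemma CC_SS: "CC t ^ 2 - SS t ^ 2 = 1"
  unfolding CC_def SS_def by (simp add: power2_eq_square field_simps flip: exp_add)

lemma SS_deriv: "(SS has_real_derivative 2 * CC t) (at t)"
  unfolding SS_def[abs_def] CC_def by (auto intro!: derivative_eq_intros simp: field_simps)

lemma CC_deriv: "(CC has_real_derivative 2 * SS t) (at t)"
  unfolding SS_def CC_def[abs_def] by (auto intro!: derivative_eq_intros simp: field_simps)

lemma besselI_FF:
  assumes nu: "nu > -1" and z: "z > 0"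
  shows "besselI nu z = (z/2) powr nu * FF nu (z^2/4)"
proof -
  have "(z/2) powr (2 * real k + nu) / (fact k * Gamma (real k + nu + 1)) = (z/2) powr nu * (aco nu k * (z^2/4)^k)" for k
  proof -
    have "(z/2) powr (2 * real k + nu) = (z/2) powr nu * (z^2/4)^k"
    proof -
      have "(z/2) powr (2 * real k + nu) = (z/2) powr (real (2*k)) * (z/2) powr nu"
        by (simp add: powr_add)
      also have "(z/2) powr (real (2*k)) = (z/2)^(2*k)" using z by (intro powr_realpow) simp
      also have "\<dots> = (z^2/4)^k" by (simp add: power_mult power_divide)
      finally show ?thesis by simp
    qed
    thus ?thesis unfolding aco_def by simp
  qed
  hence "besselI nu z = (\<Sum>k. (z/2) powr nu * (aco nu k * (z^2/4)^k))" unfolding besselI_def by simp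
  also have "\<dots> = (z/2) powr nu * FF nu (z^2/4)" unfolding FF_def
    by (rule suminf_mult[OF aco_summable[OF nu]])
  finally show ?thesis .
qed

lemma kernel_SS:
  assumes nu: "nu > -1" and t: "t > 0" and x: "x > 0" and y: "y > 0"
  shows "laguerre_heat_kernel nu t x y =
    sqrt (x*y) / SS t * exp (- (1/2) * (CC t / SS t) * (x^2 + y^2)) * besselI nu (x*y / SS t)"
proof -
  define r where "r = exp (-4*t)"
  define q where "q = exp (-2*t)"
  have q: "q > 0" unfolding q_def by simp
  have rq: "r = q^2" unfolding r_def q_def by (simp add: power2_eq_square flip: exp_add)
  have sr: "sqrt (r * x * y) = q * sqrt (x*y)" using q x y by (simp add: rq real_sqrt_mult)
  have srr: "sqrt r = q" using q by (simp add: rq)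
  have one: "1 - r = 2 * q * SS t" unfolding rq SS_def q_def
    by (simp add: power2_eq_square field_simps flip: exp_add)
  have onep: "1 + r = 2 * q * CC t" unfolding rq CC_def q_def
    by (simp add: power2_eq_square field_simps flip: exp_add)
  have S: "SS t > 0" using SS_pos[OF t] .
  have e1: "2 * sqrt (r * x * y) / (1 - r) = sqrt (x*y) / SS t" using q S unfolding sr one by simp
  have e2: "(1 + r) / (1 - r) = CC t / SS t" using q S unfolding one onep by simp
  have e3: "2 * sqrt r / (1 - r) * x * y = x * y / SS t" using q S unfolding srr one by simp
  show ?thesis unfolding laguerre_heat_kernel_def Let_def r_def[symmetric] e1 e2 e3 ..
qed



definition KK :: "real \<Rightarrow> real \<Rightarrow> real \<Rightarrow> real \<Rightarrow> real" where
  "KK nu x y t = sqrt (x*y) / SS t * exp (- (1/2) * (CC t / SS t) * (x^2 + y^2))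
     * ((x*y / SS t)/2) powr nu * FF nu ((x*y / SS t)^2/4)"

lemma kernel_KK:
  assumes nu: "nu > -1" and t: "t > 0" and x: "x > 0" and y: "y > 0"
  shows "laguerre_heat_kernel nu t x y = KK nu x y t"
  unfolding kernel_SS[OF assms] KK_def using besselI_FF[OF nu, of "x*y/SS t"] SS_pos[OF t] x y
  by simp

lemma KK_deriv:
  assumes nu: "nu > -1" and t: "t > 0" and x: "x > 0" and y: "y > 0"
  shows "(KK nu x y has_real_derivative
     KK nu x y t * ((x^2 + y^2) / SS t ^ 2 - (2 * CC t / SS t) * (nu + 1 + (x*y/SS t) * psi nu (x*y/SS t)))) (at t)"
proof -
  define L where "L s = ln (sqrt (x*y)) + (- (nu+1) * ln (SS s)) + (- (1/2) * (CC s / SS s) * (x^2 + y^2)) + nu * ln (x*y/2)" for s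
  define zf where "zf s = x*y / SS s" for s
  define G where "G s = FF nu ((zf s)^2/4)" for s
  have Spos: "SS t > 0" using SS_pos[OF t] .
  have eq: "KK nu x y s = exp (L s) * G s" if s: "s > 0" for s
  proof -
    have S: "SS s > 0" using SS_pos[OF s] .
    have P: "((x*y / SS s)/2) powr nu = exp (nu * ln (x*y/2)) / exp (nu * ln (SS s))"
      using S x y by (simp add: powr_def ln_div ln_mult algebra_simps flip: exp_diff)
    have e1: "exp (- (nu+1) * ln (SS s)) = 1 / (SS s * exp (nu * ln (SS s)))"
    proof -
      have "- (nu+1) * ln (SS s) = - (ln (SS s) + nu * ln (SS s))" by (simp add: algebra_simps)
      hence "exp (- (nu+1) * ln (SS s)) = inverse (exp (ln (SS s) + nu * ln (SS s)))" by (simp only: exp_minus)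
      thus ?thesis using S by (simp only: exp_add exp_ln) (simp add: divide_inverse)
    qed
    have e2: "exp (ln (sqrt (x*y))) = sqrt (x*y)" using x y by simp
    have "exp (L s) * G s = sqrt (x*y) * (1 / (SS s * exp (nu * ln (SS s)))) * exp (- (1/2) * (CC s / SS s) * (x^2 + y^2))
         * exp (nu * ln (x*y/2)) * G s"
      unfolding L_def exp_add e1 e2 ..
    also have "\<dots> = KK nu x y s"
      unfolding KK_def P G_def zf_def using S by (simp add: field_simps)
    finally show ?thesis by simp
  qed
  have dL: "(L has_real_derivative -(nu+1) * (2 * CC t / SS t) + (x^2+y^2) / SS t ^ 2) (at t)"
  proof -
    have "(L has_real_derivative -(nu+1) * (2 * CC t / SS t) - ((2 * SS t * SS t - CC t * (2 * CC t)) / (SS t * SS t)) * (x^2+y^2) / 2) (at t)"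
      unfolding L_def[abs_def] using Spos
      by (auto intro!: derivative_eq_intros SS_deriv CC_deriv simp: field_simps)
    moreover have "-(nu+1) * (2 * CC t / SS t) - ((2 * SS t * SS t - CC t * (2 * CC t)) / (SS t * SS t)) * (x^2+y^2) / 2
       = -(nu+1) * (2 * CC t / SS t) + (x^2+y^2) / SS t ^ 2"
    proof -
      have n: "2 * SS t * SS t - CC t * (2 * CC t) = -2" using CC_SS[of t] by (simp add: power2_eq_square algebra_simps)
      have "((2 * SS t * SS t - CC t * (2 * CC t)) / (SS t * SS t)) * (x^2+y^2) / 2 = (-2 / (SS t * SS t)) * (x^2+y^2) / 2"
        by (simp only: n)
      also have "\<dots> = - ((x^2+y^2) / SS t ^ 2)" using Spos by (simp add: power2_eq_square field_simps)
      finally have "((2 * SS t * SS t - CC t * (2 * CC t)) / (SS t * SS t)) * (x^2+y^2) / 2 = - ((x^2+y^2) / SS t ^ 2)" .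
      thus ?thesis by simp
    qed
    ultimately show ?thesis by (rule DERIV_cong)
  qed
  have dz: "(zf has_real_derivative - (x*y) * (2 * CC t) / (SS t)^2) (at t)"
    unfolding zf_def[abs_def] using Spos
    by (auto intro!: derivative_eq_intros SS_deriv simp: power2_eq_square field_simps)
  have dG: "(G has_real_derivative FF (nu + 1) ((zf t)^2/4) * (zf t / 2) * (- (x*y) * (2 * CC t) / (SS t)^2)) (at t)"
    unfolding G_def[abs_def] by (rule DERIV_chain2[OF FF_comp_deriv[OF nu] dz])
  have dK: "((\<lambda>s. exp (L s) * G s) has_real_derivative
       exp (L t) * (-(nu+1) * (2 * CC t / SS t) + (x^2+y^2) / SS t ^ 2) * G t
       + FF (nu + 1) ((zf t)^2/4) * (zf t / 2) * (- (x*y) * (2 * CC t) / (SS t)^2) * exp (L t)) (at t)"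
    by (rule DERIV_mult[OF DERIV_chain2[OF DERIV_exp dL] dG])
  have val: "exp (L t) * (-(nu+1) * (2 * CC t / SS t) + (x^2+y^2) / SS t ^ 2) * G t
       + FF (nu + 1) ((zf t)^2/4) * (zf t / 2) * (- (x*y) * (2 * CC t) / (SS t)^2) * exp (L t)
     = KK nu x y t * ((x^2 + y^2) / SS t ^ 2 - (2 * CC t / SS t) * (nu + 1 + (x*y/SS t) * psi nu (x*y/SS t)))"
  proof -
    have Gp: "G t > 0" unfolding G_def using FF_pos[OF nu] by simp
    have ps: "zf t * psi nu (zf t) * G t = (zf t / 2) * FF (nu + 1) ((zf t)^2/4) * zf t"
      unfolding psi_def G_def using Gp[unfolded G_def] by simp
    have h: "(zf t / 2) * FF (nu + 1) ((zf t)^2/4) * (- (x*y) * (2 * CC t) / (SS t)^2)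
        = - (2 * CC t / SS t) * (zf t * psi nu (zf t) * G t)"
      unfolding ps using Spos by (simp add: zf_def power2_eq_square field_simps)
    have "exp (L t) * (-(nu+1) * (2 * CC t / SS t) + (x^2+y^2) / SS t ^ 2) * G t
       + FF (nu + 1) ((zf t)^2/4) * (zf t / 2) * (- (x*y) * (2 * CC t) / (SS t)^2) * exp (L t)
       = exp (L t) * (-(nu+1) * (2 * CC t / SS t) + (x^2+y^2) / SS t ^ 2) * G t
       + exp (L t) * ((zf t / 2) * FF (nu + 1) ((zf t)^2/4) * (- (x*y) * (2 * CC t) / (SS t)^2))"
      by (simp only: mult_ac)
    also have "\<dots> = exp (L t) * (-(nu+1) * (2 * CC t / SS t) + (x^2+y^2) / SS t ^ 2) * G t
       + exp (L t) * (- (2 * CC t / SS t) * (zf t * psi nu (zf t) * G t))"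
      by (simp only: h)
    also have "\<dots> = (exp (L t) * G t) * ((x^2 + y^2) / SS t ^ 2 - (2 * CC t / SS t) * (nu + 1 + zf t * psi nu (zf t)))"
      using Spos by (simp add: field_simps)
    finally show ?thesis unfolding eq[OF t] zf_def by simp
  qed
  have "((\<lambda>s. exp (L s) * G s) has_real_derivative
     KK nu x y t * ((x^2 + y^2) / SS t ^ 2 - (2 * CC t / SS t) * (nu + 1 + (x*y/SS t) * psi nu (x*y/SS t)))) (at t)"
    using dK unfolding val .
  thus ?thesis
    by (rule has_field_derivative_transform_within_open[where S="{0<..}"]) (use t eq in auto)
qed



lemma CC_ge1: "CC t \<ge> 1"
proof -
  have "exp (2*t) + exp (-2*t) - 2 = (exp t - exp (-t))^2"
    by (simp add: power2_eq_square algebra_simps flip: exp_add)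
  hence "exp (2*t) + exp (-2*t) \<ge> 2" by (metis diff_ge_0_iff_ge zero_le_power2)
  thus ?thesis unfolding CC_def by simp
qed

lemma SS_nonneg: "t \<ge> 0 \<Longrightarrow> SS t \<ge> 0"
  unfolding SS_def by simp

lemma CC_le: "t \<ge> 0 \<Longrightarrow> CC t \<le> SS t + 1"
proof -
  assume "t \<ge> 0"
  hence "exp (-(2*t)) \<le> 1" by simp
  moreover have "CC t - SS t = exp (-(2*t))" unfolding CC_def SS_def by (simp add: field_simps)
  ultimately show ?thesis by linarith
qed

lemma SS_ge: "t \<ge> 0 \<Longrightarrow> SS t \<ge> 2 * t"
proof -
  assume t: "t \<ge> 0"
  have "(\<lambda>s. SS s - 2 * s) 0 \<le> (\<lambda>s. SS s - 2 * s) t"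
  proof (rule DERIV_nonneg_imp_nondecreasing[OF t])
    fix s :: real show "\<exists>y. ((\<lambda>s. SS s - 2 * s) has_real_derivative y) (at s) \<and> y \<ge> 0"
      using CC_ge1[of s] by (intro exI[of _ "2 * CC s - 2"]) (auto intro!: derivative_eq_intros SS_deriv)
  qed
  thus ?thesis by (simp add: SS_def)
qed

lemma SS_le: "t \<ge> 0 \<Longrightarrow> SS t \<le> 2 * t * CC t"
proof -
  assume t: "t \<ge> 0"
  have "(\<lambda>s. 2 * s * CC s - SS s) 0 \<le> (\<lambda>s. 2 * s * CC s - SS s) t"
  proof (rule DERIV_nonneg_imp_nondecreasing[OF t])
    fix s :: real assume s: "0 \<le> s"
    show "\<exists>y. ((\<lambda>s. 2 * s * CC s - SS s) has_real_derivative y) (at s) \<and> y \<ge> 0"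
      using SS_nonneg[OF s] s
      by (intro exI[of _ "2 * CC s + 2 * s * (2 * SS s) - 2 * CC s"]) (auto intro!: derivative_eq_intros SS_deriv CC_deriv)
  qed
  thus ?thesis by (simp add: SS_def CC_def)
qed

lemma SS_ge_exp: "t \<ge> 1 \<Longrightarrow> SS t \<ge> exp (2*t) / 4"
proof -
  assume t: "t \<ge> 1"
  have "exp (4*t) \<ge> 1 + 4*t" by (rule exp_ge_add_one_self)
  hence "exp (4*t) \<ge> 2" using t by linarith
  hence "exp (2*t) * exp (2*t) \<ge> 2" by (simp flip: exp_add)
  hence "exp (2*t) \<ge> 2 * exp (-2*t)"
    by (simp add: exp_minus field_simps)
  thus ?thesis unfolding SS_def by simp
qed

lemma poly_le_SS:
  assumes ab: "a \<ge> b" "b > 0"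
  shows "\<exists>K>0. \<forall>t>0. t powr a \<le> K * SS t powr b"
proof -
  define c where "c = a / (2*b)"
  have c: "c > 0" unfolding c_def using ab by simp
  define K where "K = 1 + exp (a * (ln c - 1)) * 4 powr b"
  have K: "K > 0" "K \<ge> 1" unfolding K_def by (auto intro: add_pos_nonneg)
  have "t powr a \<le> K * SS t powr b" if t: "t > 0" for t
  proof (cases "t \<le> 1")
    case True
    have "t powr a \<le> t powr b" using powr_mono'[OF ab(1)] t True by simp
    also have "\<dots> \<le> SS t powr b" using SS_ge[of t] t ab by (intro powr_mono2) auto
    also have "\<dots> \<le> K * SS t powr b" using mult_right_mono[of 1 K "SS t powr b"] K by simp
    finally show ?thesis .
  next
    case False
    have "ln t \<le> t / c - 1 + ln c"
    proof -
      have "ln (t / c) \<le> t / c - 1" using t c by (intro ln_le_minus_one) simp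
      thus ?thesis using t c by (simp add: ln_div)
    qed
    hence "a * ln t \<le> a * (t / c - 1 + ln c)" using ab by (intro mult_left_mono) auto
    also have "a * (t / c - 1 + ln c) = 2 * b * t + a * (ln c - 1)"
      unfolding c_def using ab by (simp add: field_simps)
    finally have al: "a * ln t \<le> 2 * b * t + a * (ln c - 1)" .
    have "t powr a = exp (a * ln t)" using t by (simp add: powr_def)
    also have "\<dots> \<le> exp (2 * b * t + a * (ln c - 1))" using al by simp
    also have "\<dots> = exp (a * (ln c - 1)) * 4 powr b * (exp (2*t) / 4) powr b"
    proof -
      have "(exp (2*t) / 4) powr b = exp (2 * b * t) / 4 powr b"
        by (simp add: powr_def ln_div right_diff_distrib exp_diff algebra_simps)
      hence h: "exp (2 * b * t) = 4 powr b * (exp (2*t) / 4) powr b" by (simp add: field_simps)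
      have "exp (2 * b * t + a * (ln c - 1)) = exp (a * (ln c - 1)) * exp (2 * b * t)"
        by (simp add: exp_add mult.commute)
      thus ?thesis unfolding h by (simp add: mult.assoc)
    qed
    also have "\<dots> \<le> exp (a * (ln c - 1)) * 4 powr b * SS t powr b"
      using SS_ge_exp[of t] False ab by (intro mult_left_mono powr_mono2) auto
    also have "\<dots> \<le> K * SS t powr b"
      unfolding K_def by (intro mult_right_mono) auto
    finally show ?thesis .
  qed
  thus ?thesis using K by blast
qed

lemma mul_exp_le: "u \<ge> 0 \<Longrightarrow> u * exp (- u) \<le> (1::real)"
proof -
  assume u: "u \<ge> 0"
  have "u \<le> exp u" using exp_ge_add_one_self[of u] by linarith
  thus ?thesis by (simp add: exp_minus field_simps)
qed



lemma sqrt_powr_split: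
  assumes z: "z > 0"
  shows "sqrt z * (z/2) powr nu = z powr (nu + 1/2) / 2 powr nu"
proof -
  have "sqrt z = z powr (1/2)" using z by (simp add: powr_half_sqrt)
  moreover have "(z/2) powr nu = z powr nu / 2 powr nu" using z by (simp add: powr_divide)
  ultimately show ?thesis by (simp add: powr_add)
qed

lemma W_lower:
  fixes z :: real
  assumes z: "z \<ge> 4"
  shows "(z/(1+z)) powr m \<ge> min 1 ((4/5) powr m)"
proof (cases "m \<ge> 0")
  case True
  have "4/5 \<le> z/(1+z)" using z by (simp add: field_simps)
  hence "(4/5) powr m \<le> (z/(1+z)) powr m" using True by (intro powr_mono2) auto
  thus ?thesis by simp
next
  case False
  have "z/(1+z) \<le> 1" using z by simp
  hence "1 powr m \<le> (z/(1+z)) powr m" using False z by (intro powr_mono2') auto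
  thus ?thesis by simp
qed

lemma onez_upper:
  fixes z :: real
  assumes z: "z \<ge> 0" "z \<le> 4"
  shows "(1 + z) powr m \<le> max 1 (5 powr m)"
proof (cases "m \<ge> 0")
  case True
  hence "(1 + z) powr m \<le> 5 powr m" using z by (intro powr_mono2) auto
  thus ?thesis by simp
next
  case False
  hence "(1 + z) powr m \<le> 1 powr m" using z by (intro powr_mono2') auto
  thus ?thesis by simp
qed

lemma B1:
  assumes nu: "nu > -1"
  shows "\<exists>K1>0. \<forall>z>0. sqrt z * (z/2) powr nu * FF nu (z^2/4) \<le> K1 * (z/(1+z)) powr (nu + 1/2) * exp z"
proof -
  define m where "m = nu + 1/2"
  obtain Kg where Kg: "Kg > 0" "\<And>z. z \<ge> 4 \<Longrightarrow> FF nu (z^2/4) \<le> Kg * exp z * z powr (-m)"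
    using FF_growth[OF nu] unfolding m_def by blast
  define w0 where "w0 = min 1 ((4/5) powr m)"
  have w0: "w0 > 0" unfolding w0_def by simp
  define c5 where "c5 = max 1 (5 powr m)"
  have c5: "c5 > 0" unfolding c5_def by simp
  define F4 where "F4 = FF nu (4^2/4)"
  have F4: "F4 > 0" unfolding F4_def using FF_pos[OF nu] by simp
  define K1 where "K1 = Kg / (2 powr nu * w0) + c5 * F4 / 2 powr nu"
  have K1: "K1 > 0" unfolding K1_def using Kg w0 c5 F4 by (intro add_pos_pos) auto
  have "sqrt z * (z/2) powr nu * FF nu (z^2/4) \<le> K1 * (z/(1+z)) powr m * exp z" if z: "z > 0" for z
  proof -
    have split: "sqrt z * (z/2) powr nu = z powr m / 2 powr nu" unfolding m_def by (rule sqrt_powr_split[OF z])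
    have Wdef: "(z/(1+z)) powr m = z powr m / (1+z) powr m" using z by (simp add: powr_divide)
    have Wpos: "(z/(1+z)) powr m > 0" using z by simp
    have Fpos: "FF nu (z^2/4) > 0" using FF_pos[OF nu] by simp
    show ?thesis
    proof (cases "z \<ge> 4")
      case True
      have "sqrt z * (z/2) powr nu * FF nu (z^2/4) \<le> z powr m / 2 powr nu * (Kg * exp z * z powr (-m))"
        unfolding split using Kg(2)[OF True] z by (intro mult_left_mono) auto
      also have "\<dots> = Kg / 2 powr nu * exp z"
        using z by (simp add: powr_minus field_simps)
      also have "\<dots> \<le> Kg / 2 powr nu * ((z/(1+z)) powr m / w0) * exp z"
      proof -
        have "1 \<le> (z/(1+z)) powr m / w0" using W_lower[OF True, of m] w0 unfolding w0_def[symmetric]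
          by (simp add: field_simps)
        hence "Kg / 2 powr nu * 1 * exp z \<le> Kg / 2 powr nu * ((z/(1+z)) powr m / w0) * exp z"
          using Kg by (intro mult_right_mono mult_left_mono) auto
        thus ?thesis by simp
      qed
      also have "\<dots> = Kg / (2 powr nu * w0) * (z/(1+z)) powr m * exp z" by (simp add: field_simps)
      also have "\<dots> \<le> K1 * (z/(1+z)) powr m * exp z"
        unfolding K1_def using c5 F4 Wpos by (intro mult_right_mono) (auto intro!: mult_right_mono)
      finally show ?thesis .
    next
      case False
      have "z^2 \<le> 4^2" using False z by (intro power_mono) auto
      hence FF4: "FF nu (z^2/4) \<le> F4" unfolding F4_def using False z
        by (intro FF_le[OF nu]) (auto intro!: divide_right_mono power_mono)
      have "sqrt z * (z/2) powr nu * FF nu (z^2/4) \<le> z powr m / 2 powr nu * F4"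
        unfolding split using FF4 z by (intro mult_left_mono) auto
      also have "z powr m = (z/(1+z)) powr m * (1+z) powr m" using z unfolding Wdef by simp
      also have "(z/(1+z)) powr m * (1+z) powr m / 2 powr nu * F4 \<le> (z/(1+z)) powr m * c5 / 2 powr nu * F4"
        using onez_upper[of z m] False z F4 Wpos unfolding c5_def
        by (intro mult_right_mono divide_right_mono mult_left_mono) auto
      also have "\<dots> = c5 * F4 / 2 powr nu * (z/(1+z)) powr m" by (simp add: field_simps)
      also have "\<dots> \<le> K1 * (z/(1+z)) powr m"
        unfolding K1_def using Kg w0 Wpos by (intro mult_right_mono) auto
      also have "\<dots> \<le> K1 * (z/(1+z)) powr m * exp z"
        using K1 Wpos z by simp
      finally show ?thesis .
    qed
  qed
  thus ?thesis using K1 unfolding m_def by blast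
qed



lemma t32: "t > 0 \<Longrightarrow> t powr (3/2) = t * sqrt t"
proof -
  assume t: "t > 0"
  have "t powr (3/2) = t powr (1 + 1/2)" by simp
  also have "\<dots> = t * sqrt t" using t by (simp only: powr_add powr_half_sqrt) simp
  finally show ?thesis .
qed

lemma stepF_pos:
  assumes nu: "nu \<ge> -1/2"
  shows "\<exists>K4>0. \<forall>t x y. t > 0 \<longrightarrow> x > 0 \<longrightarrow> y > 0 \<longrightarrow>
     ((x*y/SS t)/(1 + x*y/SS t)) powr (nu + 1/2) * (CC t / (SS t * sqrt (SS t)))
       \<le> K4 / t powr (3/2)"
proof -
  obtain Ka where Ka: "Ka > 0" "\<And>t. t > 0 \<Longrightarrow> t powr 3 \<le> Ka * SS t powr 1"
    using poly_le_SS[of 1 3] by auto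
  define K4 where "K4 = sqrt Ka + 1"
  have K4: "K4 > 0" unfolding K4_def using Ka by (simp add: add_pos_pos)
  have "((x*y/SS t)/(1 + x*y/SS t)) powr (nu + 1/2) * (CC t / (SS t * sqrt (SS t))) \<le> K4 / t powr (3/2)"
    if t: "t > 0" and x: "x > 0" and y: "y > 0" for t x y
  proof -
    define S where "S = SS t"
    have S: "S > 0" "S \<ge> 2*t" unfolding S_def using SS_pos[OF t] SS_ge[of t] t by auto
    have W: "((x*y/S)/(1 + x*y/S)) powr (nu + 1/2) \<le> 1"
    proof (rule powr_le1)
      have a: "x*y/S \<ge> 0" using S x y by simp
      have "\<And>a::real. a \<ge> 0 \<Longrightarrow> \<bar>a / (1 + a)\<bar> \<le> 1" by (simp add: abs_if field_simps)
      from this[OF a] show "\<bar>(x*y/S)/(1 + x*y/S)\<bar> \<le> 1" .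
    qed (use nu in simp)
    have co: "CC t / (S * sqrt S) \<le> 1 / sqrt S + 1 / (S * sqrt S)"
    proof -
      have "CC t \<le> S + 1" unfolding S_def using CC_le[of t] t by simp
      hence "CC t / (S * sqrt S) \<le> (S + 1) / (S * sqrt S)" using S by (intro divide_right_mono) auto
      also have "\<dots> = 1 / sqrt S + 1 / (S * sqrt S)" using S by (simp add: field_simps)
      finally show ?thesis .
    qed
    have i1: "1 / sqrt S \<le> sqrt Ka / (t * sqrt t)"
    proof -
      have "t^3 \<le> Ka * S" using Ka(2)[OF t] t S unfolding S_def by (simp add: powr_realpow)
      hence "sqrt (t^3) \<le> sqrt (Ka * S)" by simp
      hence "t * sqrt t \<le> sqrt Ka * sqrt S" using t
        by (simp add: real_sqrt_mult power3_eq_cube)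
      thus ?thesis using S t by (simp add: field_simps)
    qed
    have i2: "1 / (S * sqrt S) \<le> 1 / (t * sqrt t)"
    proof -
      have "t * sqrt t \<le> S * sqrt S" using S t by (intro mult_mono) auto
      thus ?thesis using S t by (intro divide_left_mono) auto
    qed
    have "((x*y/S)/(1 + x*y/S)) powr (nu + 1/2) * (CC t / (S * sqrt S)) \<le> 1 * (CC t / (S * sqrt S))"
      using W S CC_ge1[of t] by (intro mult_right_mono) auto
    also have "\<dots> \<le> sqrt Ka / (t * sqrt t) + 1 / (t * sqrt t)" using co i1 i2 by simp
    also have "\<dots> = K4 / t powr (3/2)" unfolding K4_def t32[OF t] by (simp add: add_divide_distrib)
    finally show ?thesis unfolding S_def .
  qed
  thus ?thesis using K4 by blast
qed



lemma stepF_neg: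
  assumes nu1: "nu > -1" and nu2: "nu < -1/2"
  shows "\<exists>K4>0. \<forall>t x y. t > 0 \<longrightarrow> x > 0 \<longrightarrow> y > 0 \<longrightarrow>
     ((x*y/SS t)/(1 + x*y/SS t)) powr (nu + 1/2) * (CC t / (SS t * sqrt (SS t)))
       \<le> K4 / t powr (3/2) * (1 + sqrt t / x) powr (-1/2 - nu) * (1 + sqrt t / y) powr (-1/2 - nu)"
proof -
  define g where "g = -1/2 - nu"
  have g: "g > 0" "g < 1/2" unfolding g_def using nu1 nu2 by auto
  obtain Kb where Kb: "Kb > 0" "\<And>t. t > 0 \<Longrightarrow> t powr (nu + 2) \<le> Kb * SS t powr (nu + 1)"
    using poly_le_SS[of "nu + 1" "nu + 2"] nu1 by auto
  define K4 where "K4 = 2 * (1 + Kb)"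
  have K4: "K4 > 0" unfolding K4_def using Kb by simp
  have "((x*y/SS t)/(1 + x*y/SS t)) powr (nu + 1/2) * (CC t / (SS t * sqrt (SS t)))
       \<le> K4 / t powr (3/2) * (1 + sqrt t / x) powr g * (1 + sqrt t / y) powr g"
    if t: "t > 0" and x: "x > 0" and y: "y > 0" for t x y
  proof -
    define S where "S = SS t"
    have S: "S > 0" "S \<ge> 2*t" unfolding S_def using SS_pos[OF t] SS_ge[of t] t by auto
    define a where "a = x*y/S"
    have a: "a > 0" unfolding a_def using S x y by simp
    define P where "P = (1 + sqrt t / x) * (1 + sqrt t / y)"
    have P: "P > 0" unfolding P_def using t x y by (intro mult_pos_pos add_pos_nonneg) auto
    have W1: "(a/(1+a)) powr (nu + 1/2) = ((1+a)/a) powr g"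
    proof -
      have "nu + 1/2 = - g" unfolding g_def by simp
      hence "(a/(1+a)) powr (nu + 1/2) = 1 / (a/(1+a)) powr g" by (simp add: powr_minus_divide)
      also have "\<dots> = ((1+a)/a) powr g" using a by (simp add: powr_divide)
      finally show ?thesis .
    qed
    have W2: "(1+a)/a \<le> (1 + S/t) * P"
    proof -
      have e: "(1+a)/a = 1 + S/(x*y)" unfolding a_def using S x y by (simp add: field_simps)
      have "P = 1 + sqrt t / x + sqrt t / y + t/(x*y)"
        unfolding P_def using t x y by (simp add: field_simps)
      hence P1: "P \<ge> 1 + t/(x*y)" using t x y by simp
      have "(1 + S/t) * P \<ge> (1 + S/t) * (1 + t/(x*y))" using P1 S t by (intro mult_left_mono) auto
      moreover have "(1 + S/t) * (1 + t/(x*y)) = 1 + t/(x*y) + S/t + S/(x*y)"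
        using t x y by (simp add: field_simps)
      moreover have "t/(x*y) \<ge> 0" "S/t \<ge> 0" using t x y S by auto
      ultimately show ?thesis unfolding e by linarith
    qed
    have W3: "((1+a)/a) powr g \<le> (1 + S/t) powr g * P powr g"
    proof -
      have "((1+a)/a) powr g \<le> ((1 + S/t) * P) powr g" using W2 g a by (intro powr_mono2) auto
      thus ?thesis by (simp add: powr_mult)
    qed
    have W4: "(1 + S/t) powr g \<le> 2 powr g * S powr g / t powr g"
    proof -
      have "1 + S/t \<le> 2 * S / t" using S t by (simp add: field_simps)
      hence "(1 + S/t) powr g \<le> (2 * S / t) powr g" using g S t by (intro powr_mono2) auto
      thus ?thesis by (simp add: powr_mult powr_divide)
    qed
    have co: "CC t / (S * sqrt S) \<le> S powr (-3/2) + S powr (-1/2)"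
    proof -
      have "CC t \<le> S + 1" unfolding S_def using CC_le[of t] t by simp
      hence "CC t / (S * sqrt S) \<le> (S + 1) / (S * sqrt S)" using S by (intro divide_right_mono) auto
      also have "\<dots> = 1 / (S * sqrt S) + 1 / sqrt S" using S by (simp add: field_simps)
      also have "\<dots> = S powr (-3/2) + S powr (-1/2)"
        using S by (simp add: powr_minus_divide t32 powr_half_sqrt)
      finally show ?thesis .
    qed
    have Q1: "S powr g * S powr (-3/2) \<le> t powr (g - 3/2)"
    proof -
      have "S powr g * S powr (-3/2) = S powr (g - 3/2)" by (simp add: powr_add[symmetric])
      also have "\<dots> \<le> t powr (g - 3/2)" using g S t by (intro powr_mono2') auto
      finally show ?thesis .
    qed
    have Q2: "S powr g * S powr (-1/2) \<le> Kb * t powr (g - 3/2)"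
    proof -
      have "S powr g * S powr (-1/2) = S powr (g + -1/2)" by (simp only: powr_add)
      also have "g + -1/2 = - (nu + 1)" unfolding g_def by simp
      also have "S powr (- (nu + 1)) = 1 / S powr (nu + 1)" by (rule powr_minus_divide)
      finally have "S powr g * S powr (-1/2) = 1 / S powr (nu + 1)" .
      also have "\<dots> \<le> Kb / t powr (nu + 2)"
      proof -
        have "t powr (nu + 2) \<le> Kb * S powr (nu + 1)" using Kb(2)[OF t] unfolding S_def .
        thus ?thesis using S t Kb by (simp add: field_simps)
      qed
      also have "\<dots> = Kb * t powr (g - 3/2)"
      proof -
        have "g - 3/2 = - (nu + 2)" unfolding g_def by simp
        thus ?thesis by (simp only: powr_minus_divide) simp
      qed
      finally show ?thesis .
    qed
    have "(a/(1+a)) powr (nu + 1/2) * (CC t / (S * sqrt S))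
        \<le> (2 powr g * S powr g / t powr g * P powr g) * (S powr (-3/2) + S powr (-1/2))"
    proof -
      have "(a/(1+a)) powr (nu + 1/2) \<le> 2 powr g * S powr g / t powr g * P powr g"
        unfolding W1 using W3 W4 by (meson mult_right_mono order_trans powr_ge_zero)
      moreover have "CC t \<ge> 0" using CC_ge1[of t] by simp
      ultimately show ?thesis using co S by (intro mult_mono) auto
    qed
    also have "\<dots> = 2 powr g * P powr g / t powr g * (S powr g * S powr (-3/2) + S powr g * S powr (-1/2))"
      by (simp add: algebra_simps)
    also have "\<dots> \<le> 2 powr g * P powr g / t powr g * (t powr (g - 3/2) + Kb * t powr (g - 3/2))"
      using Q1 Q2 by (intro mult_left_mono add_mono) auto
    also have "\<dots> = 2 powr g * (1 + Kb) * P powr g * (t powr (g - 3/2) / t powr g)"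
      by (simp add: algebra_simps)
    also have "t powr (g - 3/2) / t powr g = 1 / t powr (3/2)"
      by (simp add: powr_diff powr_minus_divide)
    also have "2 powr g * (1 + Kb) * P powr g * (1 / t powr (3/2)) \<le> 2 * (1 + Kb) * P powr g * (1 / t powr (3/2))"
    proof -
      have "2 powr g \<le> 2 powr (1::real)" using g by (intro powr_mono) auto
      thus ?thesis using Kb t by (intro mult_right_mono) auto
    qed
    also have "\<dots> = K4 / t powr (3/2) * (1 + sqrt t / x) powr g * (1 + sqrt t / y) powr g"
      unfolding K4_def P_def by (simp add: powr_mult)
    finally show ?thesis unfolding a_def S_def .
  qed
  thus ?thesis using K4 unfolding g_def by blast
qed



lemma step5:
  fixes S co x y q nu K2 :: real
  assumes S: "S > 0" and co: "co \<ge> 1" and x: "x > 0" and y: "y > 0"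
    and q: "\<bar>q - x*y/S\<bar> \<le> K2"
  shows "exp (x*y/S) * exp (- (1/2) * (co / S) * (x^2 + y^2))
           * \<bar>(x^2 + y^2) / S^2 - (2 * co / S) * (nu + 1 + q)\<bar>
       \<le> exp (- (co * (x-y)^2 / (4*S))) * (co / S) * (6 + 2 * \<bar>nu + 1\<bar> + 2 * K2)"
proof -
  define u where "u = co * (x-y)^2 / (4*S)"
  define v where "v = x*y*(co - 1) / S"
  have u: "u \<ge> 0" unfolding u_def using S co by simp
  have v: "v \<ge> 0" unfolding v_def using S co x y by simp
  have ex: "exp (x*y/S) * exp (- (1/2) * (co / S) * (x^2 + y^2)) = exp (-u) * exp (-u) * exp (-v)"
  proof -
    have "x*y/S + (- (1/2) * (co / S) * (x^2 + y^2)) = -u + -u + -v"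
      unfolding u_def v_def using S by (simp add: field_simps power2_eq_square)
    thus ?thesis by (metis exp_add)
  qed
  have br: "(x^2 + y^2) / S^2 - (2 * co / S) * (nu + 1 + q)
      = (4 / (co * S)) * u - (2 / S) * v - (2 * co / S) * (nu + 1 + (q - x*y/S))"
    unfolding u_def v_def using S co by (simp add: field_simps power2_eq_square)
  have cS: "co / S > 0" using S co by simp
  have abr: "\<bar>(x^2 + y^2) / S^2 - (2 * co / S) * (nu + 1 + q)\<bar>
      \<le> (4 / (co * S)) * u + (2 / S) * v + (2 * co / S) * (\<bar>nu + 1\<bar> + K2)"
  proof -
    have c1: "\<bar>nu + 1 + (q - x*y/S)\<bar> \<le> \<bar>nu + 1\<bar> + K2" using q by (simp add: abs_triangle_ineq order_trans[OF abs_triangle_ineq])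
    have c2: "\<bar>(2 * co / S) * (nu + 1 + (q - x*y/S))\<bar> = (2 * co / S) * \<bar>nu + 1 + (q - x*y/S)\<bar>"
      using S co by (simp add: abs_mult)
    have "\<bar>(2 * co / S) * (nu + 1 + (q - x*y/S))\<bar> \<le> (2 * co / S) * (\<bar>nu + 1\<bar> + K2)"
    proof -
      have "2 * co / S \<ge> 0" using cS by simp
      from mult_left_mono[OF c1 this] c2 show ?thesis by simp
    qed
    moreover have "(4 / (co * S)) * u \<ge> 0" "(2 / S) * v \<ge> 0" using u v S co by auto
    moreover have gen: "\<And>A B C::real. A \<ge> 0 \<Longrightarrow> B \<ge> 0 \<Longrightarrow> \<bar>A - B - C\<bar> \<le> A + B + \<bar>C\<bar>"
      by (simp add: abs_le_iff) (smt (verit))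
    ultimately show ?thesis unfolding br
      by (meson add_left_mono order_trans)
  qed
  have e1: "exp (-v) * ((4 / (co * S)) * (u * exp (-u))) \<le> (4 * co / S)"
  proof -
    have "exp (-v) \<le> 1" using v by simp
    moreover have "u * exp (-u) \<le> 1" by (rule mul_exp_le[OF u])
    ultimately have "exp (-v) * ((4 / (co * S)) * (u * exp (-u))) \<le> 1 * ((4 / (co * S)) * 1)"
      using u S co by (intro mult_mono) auto
    also have "\<dots> \<le> 4 * co / S"
    proof -
      have "1 / co \<le> co" using co by (simp add: field_simps) (metis mult_mono order_trans zero_le_one mult_1_left)
      hence "(4 / S) * (1 / co) \<le> (4 / S) * co" using S by (intro mult_left_mono) auto
      thus ?thesis by (simp add: mult.commute)
    qed
    finally show ?thesis .
  qed
  have e2: "exp (-u) * ((2 / S) * (v * exp (-v))) \<le> 2 * co / S"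
  proof -
    have "exp (-u) \<le> 1" using u by simp
    moreover have "v * exp (-v) \<le> 1" by (rule mul_exp_le[OF v])
    ultimately have "exp (-u) * ((2 / S) * (v * exp (-v))) \<le> 1 * ((2 / S) * 1)"
      using v S by (intro mult_mono) auto
    also have "\<dots> \<le> 2 * co / S" using S co by (simp add: divide_right_mono)
    finally show ?thesis .
  qed
  have e3: "exp (-u) * exp (-v) \<le> 1" using u v by (simp add: mult_le_one)
  have "exp (x*y/S) * exp (- (1/2) * (co / S) * (x^2 + y^2))
           * \<bar>(x^2 + y^2) / S^2 - (2 * co / S) * (nu + 1 + q)\<bar>
      \<le> exp (-u) * exp (-u) * exp (-v) * ((4 / (co * S)) * u + (2 / S) * v + (2 * co / S) * (\<bar>nu + 1\<bar> + K2))"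
    unfolding ex using abr by (intro mult_left_mono) auto
  also have "\<dots> = exp (-u) * (exp (-v) * ((4 / (co * S)) * (u * exp (-u))))
      + exp (-u) * (exp (-u) * ((2 / S) * (v * exp (-v))))
      + exp (-u) * (exp (-u) * exp (-v)) * ((2 * co / S) * (\<bar>nu + 1\<bar> + K2))"
    by (simp add: algebra_simps)
  also have "\<dots> \<le> exp (-u) * (4 * co / S) + exp (-u) * (2 * co / S) + exp (-u) * 1 * ((2 * co / S) * (\<bar>nu + 1\<bar> + K2))"
  proof -
    have K2: "K2 \<ge> 0" using q by linarith
    have "(2 * co / S) * (\<bar>nu + 1\<bar> + K2) \<ge> 0" using cS K2 by (intro mult_nonneg_nonneg) auto
    thus ?thesis using e1 e2 e3 by (intro add_mono mult_left_mono mult_right_mono) auto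
  qed
  also have "\<dots> = exp (-u) * (co / S) * (6 + 2 * \<bar>nu + 1\<bar> + 2 * K2)"
    by (simp add: algebra_simps add_divide_distrib)
  finally show ?thesis unfolding u_def by simp
qed



lemma stepF:
  assumes nu: "nu > -1"
  shows "\<exists>K4>0. \<forall>t x y. t > 0 \<longrightarrow> x > 0 \<longrightarrow> y > 0 \<longrightarrow>
     ((x*y/SS t)/(1 + x*y/SS t)) powr (nu + 1/2) * (CC t / (SS t * sqrt (SS t)))
       \<le> K4 / t powr (3/2) * (1 + sqrt t / x) powr gamma_nu nu * (1 + sqrt t / y) powr gamma_nu nu"
proof (cases "nu < -1/2")
  case True
  thus ?thesis using stepF_neg[OF nu True] unfolding gamma_nu_def by simp
next
  case False
  hence g: "gamma_nu nu = 0" unfolding gamma_nu_def by simp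
  obtain K4 where K4: "K4 > 0" "\<forall>t x y. t > 0 \<longrightarrow> x > 0 \<longrightarrow> y > 0 \<longrightarrow>
     ((x*y/SS t)/(1 + x*y/SS t)) powr (nu + 1/2) * (CC t / (SS t * sqrt (SS t))) \<le> K4 / t powr (3/2)"
    using stepF_pos[of nu] False by auto
  have "\<forall>t x y. t > 0 \<longrightarrow> x > 0 \<longrightarrow> y > 0 \<longrightarrow>
     ((x*y/SS t)/(1 + x*y/SS t)) powr (nu + 1/2) * (CC t / (SS t * sqrt (SS t)))
       \<le> K4 / t powr (3/2) * (1 + sqrt t / x) powr gamma_nu nu * (1 + sqrt t / y) powr gamma_nu nu"
  proof (intro allI impI)
    fix t x y :: real assume t: "t > 0" and x: "x > 0" and y: "y > 0"
    have h: "(1 + sqrt t / x) powr gamma_nu nu = 1 \<and> (1 + sqrt t / y) powr gamma_nu nu = 1"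
    proof -
      have "sqrt t / x \<ge> 0" "sqrt t / y \<ge> 0" using t x y by auto
      hence "1 + sqrt t / x > 0" "1 + sqrt t / y > 0" by linarith+
      thus ?thesis unfolding g by auto
    qed
    show "((x*y/SS t)/(1 + x*y/SS t)) powr (nu + 1/2) * (CC t / (SS t * sqrt (SS t)))
       \<le> K4 / t powr (3/2) * (1 + sqrt t / x) powr gamma_nu nu * (1 + sqrt t / y) powr gamma_nu nu"
      unfolding h[THEN conjunct1] h[THEN conjunct2] mult_1_right using K4(2) t x y by blast
  qed
  thus ?thesis using K4(1) by blast
qed

theorem proposition3p5:
  fixes nu :: real
  assumes "nu > -1"
  shows "\<exists>C c. C > 0 \<and> c > 0 \<and>
    (\<forall>t x y. t > 0 \<longrightarrow> x > 0 \<longrightarrow> y > 0 \<longrightarrow>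
      \<bar>deriv (\<lambda>s. laguerre_heat_kernel nu s x y) t\<bar>
        \<le> C / t powr (3/2) * exp (- ((x - y)^2 / (c * t)))
           * (1 + sqrt t / x) powr gamma_nu nu * (1 + sqrt t / y) powr gamma_nu nu)"
proof -
  note nu = assms
  obtain K1 where K1: "K1 > 0" "\<And>z. z > 0 \<Longrightarrow> sqrt z * (z/2) powr nu * FF nu (z^2/4) \<le> K1 * (z/(1+z)) powr (nu + 1/2) * exp z"
    using B1[OF nu] by blast
  obtain K2 where K2: "K2 > 0" "\<And>z. z > 0 \<Longrightarrow> \<bar>z * psi nu z - z\<bar> \<le> K2"
    using psi_close[OF nu] by blast
  obtain K4 where K4: "K4 > 0" "\<And>t x y. t > 0 \<Longrightarrow> x > 0 \<Longrightarrow> y > 0 \<Longrightarrow>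
     ((x*y/SS t)/(1 + x*y/SS t)) powr (nu + 1/2) * (CC t / (SS t * sqrt (SS t)))
       \<le> K4 / t powr (3/2) * (1 + sqrt t / x) powr gamma_nu nu * (1 + sqrt t / y) powr gamma_nu nu"
    using stepF[OF nu] by blast
  define K3 where "K3 = 6 + 2 * \<bar>nu + 1\<bar> + 2 * K2"
  have K3: "K3 > 0" unfolding K3_def using K2(1) by (intro add_pos_pos add_pos_nonneg) auto
  define C where "C = K1 * K3 * K4"
  have C: "C > 0" unfolding C_def using K1 K3 K4 by simp
  have main: "\<bar>deriv (\<lambda>s. laguerre_heat_kernel nu s x y) t\<bar>
        \<le> C / t powr (3/2) * exp (- ((x - y)^2 / (8 * t)))
           * (1 + sqrt t / x) powr gamma_nu nu * (1 + sqrt t / y) powr gamma_nu nu"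
    if t: "t > 0" and x: "x > 0" and y: "y > 0" for t x y
  proof -
    define S where "S = SS t"
    define co where "co = CC t"
    define z where "z = x*y/S"
    have S: "S > 0" unfolding S_def using SS_pos[OF t] .
    have co: "co \<ge> 1" unfolding co_def using CC_ge1 .
    have z: "z > 0" unfolding z_def using S x y by simp
    define br where "br = (x^2 + y^2) / S^2 - (2 * co / S) * (nu + 1 + z * psi nu z)"
    have dK: "(KK nu x y has_real_derivative KK nu x y t * br) (at t)"
      using KK_deriv[OF nu t x y] unfolding br_def S_def co_def z_def .
    have "((\<lambda>s. laguerre_heat_kernel nu s x y) has_real_derivative KK nu x y t * br) (at t)"
      by (rule has_field_derivative_transform_within_open[OF dK, where S="{0<..}"])
         (use t kernel_KK[OF nu _ x y] in auto)
    hence dv: "deriv (\<lambda>s. laguerre_heat_kernel nu s x y) t = KK nu x y t * br"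
      by (rule DERIV_imp_deriv)
    define E where "E = exp (- (1/2) * (co / S) * (x^2 + y^2))"
    define A where "A = sqrt z * (z/2) powr nu * FF nu (z^2/4)"
    have A0: "A \<ge> 0" unfolding A_def using FF_pos[OF nu, of "z^2/4"] z by simp
    have KKA: "KK nu x y t = A * E / sqrt S"
    proof -
      have "sqrt (x*y) = sqrt z * sqrt S" unfolding z_def using S by (simp flip: real_sqrt_mult)
      hence "sqrt (x*y) / S = sqrt z / sqrt S" using S by (simp add: field_simps)
      thus ?thesis unfolding KK_def A_def E_def S_def[symmetric] co_def[symmetric] z_def[symmetric]
        by (simp add: field_simps)
    qed
    define W where "W = (z/(1+z)) powr (nu + 1/2)"
    have W0: "W \<ge> 0" unfolding W_def by simp
    have A1: "A \<le> K1 * W * exp z" unfolding A_def W_def using K1(2)[OF z] .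
    have st5: "exp z * E * \<bar>br\<bar> \<le> exp (- (co * (x-y)^2 / (4*S))) * (co / S) * K3"
      unfolding z_def E_def br_def K3_def
      by (rule step5[OF S co x y]) (use K2(2)[OF z] in \<open>simp add: z_def\<close>)
    have "\<bar>deriv (\<lambda>s. laguerre_heat_kernel nu s x y) t\<bar> = A / sqrt S * (E * \<bar>br\<bar>)"
      unfolding dv KKA using A0 S by (simp add: abs_mult E_def)
    also have "\<dots> \<le> K1 * W * exp z / sqrt S * (E * \<bar>br\<bar>)"
      using A1 S E_def by (intro mult_right_mono divide_right_mono) auto
    also have "\<dots> = K1 * W / sqrt S * (exp z * E * \<bar>br\<bar>)" by simp
    also have "\<dots> \<le> K1 * W / sqrt S * (exp (- (co * (x-y)^2 / (4*S))) * (co / S) * K3)"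
      using st5 K1 W0 S by (intro mult_left_mono) auto
    also have "\<dots> = K1 * K3 * exp (- (co * (x-y)^2 / (4*S))) * (W * (co / (S * sqrt S)))"
      using S by (simp add: field_simps)
    also have "\<dots> \<le> K1 * K3 * exp (- ((x - y)^2 / (8 * t))) * (W * (co / (S * sqrt S)))"
    proof -
      have "S \<le> 2 * t * co" unfolding S_def co_def using SS_le[of t] t by simp
      hence r: "1 / (8 * t) \<le> co / (4*S)" using S t by (simp add: divide_simps mult.commute mult.left_commute)
      have "(x - y)^2 * (1 / (8 * t)) \<le> (x - y)^2 * (co / (4*S))"
        by (rule mult_left_mono[OF r]) simp
      hence "(x - y)^2 / (8 * t) \<le> co * (x-y)^2 / (4*S)" by (simp add: mult.commute)
      hence "exp (- (co * (x-y)^2 / (4*S))) \<le> exp (- ((x - y)^2 / (8 * t)))" by simp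
      moreover have "W * (co / (S * sqrt S)) \<ge> 0" using W0 S co by simp
      ultimately show ?thesis using K1 K3 by (intro mult_right_mono mult_left_mono) auto
    qed
    also have "\<dots> \<le> K1 * K3 * exp (- ((x - y)^2 / (8 * t))) *
        (K4 / t powr (3/2) * (1 + sqrt t / x) powr gamma_nu nu * (1 + sqrt t / y) powr gamma_nu nu)"
      using K4(2)[OF t x y] K1 K3 unfolding W_def z_def S_def co_def by (intro mult_left_mono) auto
    also have "\<dots> = C / t powr (3/2) * exp (- ((x - y)^2 / (8 * t)))
           * (1 + sqrt t / x) powr gamma_nu nu * (1 + sqrt t / y) powr gamma_nu nu"
      unfolding C_def by (simp add: field_simps)
    finally show ?thesis .
  qed
  show ?thesis
    by (rule exI[of _ C], rule exI[of _ 8]) (use C main in auto)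
qed

end
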